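(* Let $n\ge3$ be an odd integer. Then the number of edges of $OD(\mathcal{D}_n)$ is $$|E(OD(\mathcal{D}_n))|=\frac12\Big(3n-1+\sum_{\substack{m\mid n\\ m>1}}\Big(m-2\phi(m)+\sum_{\lambda\mid\frac{n}{m}}\phi(\lambda m)\Big)\phi(m)\Big),$$ where $\phi$ is Euler's totient function.
   Context: The dihedral group $\mathcal{D}_n$ ($n\ge3$) is the group $\langle a,b\mid a^n=b^2=(ab)^2=e\rangle$ of order $2n$. For a finite group $G$, $o(x)$ denotes the order of $x\in G$. The order-divisor graph $OD(G)$ is the simple undirected graph with vertex set $G$, in which two distinct vertices $x,y$ are adjacent if and only if $o(x)\neq o(y)$ and either $o(x)\mid o(y)$ or $o(y)\mid o(x)$. *)

theory Defs
  imports "HOL-Algebra.Algebra" "HOL-Number_Theory.Number_Theory"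
begin

text \<open>Concrete model of the dihedral group D_n of order 2n: the pair (i, False)
  stands for a^i and (i, True) for a^i b, with i in {0..n-1}.
  Using b a^j = a^(-j) b we get (a^i b^r)(a^j b^s) = a^(i +- j) b^(r xor s).\<close>
definition dihedral :: "nat \<Rightarrow> (int \<times> bool) monoid" where
  "dihedral n = \<lparr> carrier = {0..<int n} \<times> UNIV,
     monoid.mult = (\<lambda>x y. ((if snd x then fst x - fst y else fst x + fst y) mod int n,
                          snd x \<noteq> snd y)),
     monoid.one = (0, False) \<rparr>"

definition od_adj :: "('a, 'b) monoid_scheme \<Rightarrow> 'a \<Rightarrow> 'a \<Rightarrow> bool" where
  "od_adj G x y \<longleftrightarrow> x \<noteq> y \<and> group.ord G x \<noteq> group.ord G y \<and>
     (group.ord G x dvd group.ord G y \<or> group.ord G y dvd group.ord G x)"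

definition od_edges :: "('a, 'b) monoid_scheme \<Rightarrow> 'a set set" where
  "od_edges G = {{x, y} | x y. x \<in> carrier G \<and> y \<in> carrier G \<and> od_adj G x y}"

end

theory Submission
  imports Defs
begin

lemma dih_carrier: "carrier (dihedral n) = {0..<int n} \<times> UNIV"
  by (simp add: dihedral_def)
lemma dih_one: "\<one>\<^bsub>dihedral n\<^esub> = (0, False)"
  by (simp add: dihedral_def)
lemma dih_mult: "x \<otimes>\<^bsub>dihedral n\<^esub> y = ((if snd x then fst x - fst y else fst x + fst y) mod int n, snd x \<noteq> snd y)"
  by (simp add: dihedral_def)

lemma dih_group: assumes "n > 0" shows "group (dihedral n)"
proof (rule groupI)
  fix x y assume "x \<in> carrier (dihedral n)" "y \<in> carrier (dihedral n)"
  then show "x \<otimes>\<^bsub>dihedral n\<^esub> y \<in> carrier (dihedral n)"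
    using assms by (simp add: dih_carrier dih_mult)
next
  show "\<one>\<^bsub>dihedral n\<^esub> \<in> carrier (dihedral n)" using assms by (simp add: dih_carrier dih_one)
next
  fix x y z assume "x \<in> carrier (dihedral n)" "y \<in> carrier (dihedral n)" "z \<in> carrier (dihedral n)"
  then show "x \<otimes>\<^bsub>dihedral n\<^esub> y \<otimes>\<^bsub>dihedral n\<^esub> z =
           x \<otimes>\<^bsub>dihedral n\<^esub> (y \<otimes>\<^bsub>dihedral n\<^esub> z)"
  proof -
    obtain a r b s c t where "x = (a,r)" "y = (b,s)" "z = (c,t)" by (metis prod.exhaust)
    then show ?thesis
      by (cases r; cases s; cases t; simp add: dih_mult; simp add: mod_diff_left_eq mod_add_left_eq mod_diff_right_eq mod_add_right_eq algebra_simps)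
  qed
next
  fix x assume "x \<in> carrier (dihedral n)"
  then show "\<one>\<^bsub>dihedral n\<^esub> \<otimes>\<^bsub>dihedral n\<^esub> x = x"
    by (cases x) (auto simp add: dih_mult dih_one dih_carrier)
next
  fix x assume x: "x \<in> carrier (dihedral n)"
  show "\<exists>y\<in>carrier (dihedral n). y \<otimes>\<^bsub>dihedral n\<^esub> x = \<one>\<^bsub>dihedral n\<^esub>"
  proof (cases "snd x")
    case True
    then show ?thesis using x by (intro bexI[of _ x]) (auto simp add: dih_mult dih_one)
  next
    case False
    then show ?thesis using x assms
      by (intro bexI[of _ "((- fst x) mod int n, False)"]) (auto simp add: dih_mult dih_one dih_carrier mod_simps)
  qed
qed

lemma pow_rot: assumes "n > 0" "0 \<le> i" "i < int n"
  shows "(i, False) [^]\<^bsub>dihedral n\<^esub> (k::nat) = ((i * int k) mod int n, False)"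
proof (induction k)
  case 0 then show ?case by (simp add: dih_one)
next
  case (Suc k)
  then show ?case
  proof -
    have "(i * int k mod int n + i) mod int n = (i * int k + i) mod int n"
      by (rule mod_add_left_eq)
    also have "i * int k + i = i * int (Suc k)" by (simp add: algebra_simps)
    finally have "(i * int k mod int n + i) mod int n = (i * int (Suc k)) mod int n" .
    then show ?thesis using Suc by (simp add: dih_mult del: of_nat_Suc)
  qed
qed

lemma pow_refl: assumes "n > 0" "0 \<le> i" "i < int n"
  shows "(i, True) [^]\<^bsub>dihedral n\<^esub> (k::nat) = (if even k then (0, False) else (i, True))"
proof (induction k)
  case 0 then show ?case by (simp add: dih_one)
next
  case (Suc k)
  show ?case
  proof (cases "even k")
    case True
    then show ?thesis using Suc assms by (simp add: dih_mult)
  next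
    case False
    then show ?thesis using Suc assms by (simp add: dih_mult)
  qed
qed

lemma dvd_mult_iff_div_gcd:
  fixes n j k :: nat assumes "n > 0"
  shows "n dvd j * k \<longleftrightarrow> n div gcd j n dvd k"
proof -
  define g where "g = gcd j n"
  have g0: "g > 0" using assms by (simp add: g_def)
  have cp: "coprime (j div g) (n div g)" unfolding g_def
    by (rule div_gcd_coprime) (use assms in auto)
  have n: "n = g * (n div g)" and j: "j = g * (j div g)" unfolding g_def by simp_all
  have "n dvd j * k \<longleftrightarrow> g * (n div g) dvd g * ((j div g) * k)"
    using n j by (metis mult.assoc)
  also have "\<dots> \<longleftrightarrow> (n div g) dvd (j div g) * k" using g0 by simp
  also have "\<dots> \<longleftrightarrow> n div g dvd k" using cp
    by (simp add: coprime_dvd_mult_right_iff coprime_commute)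
  finally show ?thesis unfolding g_def .
qed

lemma ord_rot: assumes "n > 0" "j < n"
  shows "group.ord (dihedral n) (int j, False) = n div gcd j n"
proof -
  interpret group "dihedral n" using dih_group assms by blast
  have c: "(int j, False) \<in> carrier (dihedral n)" using assms by (simp add: dih_carrier)
  show ?thesis
    unfolding ord_unique[OF c]
  proof
    fix k :: nat
    have "(int j, False) [^]\<^bsub>dihedral n\<^esub> k = \<one>\<^bsub>dihedral n\<^esub> \<longleftrightarrow> (int j * int k) mod int n = 0"
      using assms by (simp add: pow_rot dih_one)
    also have "\<dots> \<longleftrightarrow> n dvd j * k"
      by (metis dvd_eq_mod_eq_0 of_nat_dvd_iff of_nat_mult)
    also have "\<dots> \<longleftrightarrow> n div gcd j n dvd k" using dvd_mult_iff_div_gcd assms by blast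
    finally show "(int j, False) [^]\<^bsub>dihedral n\<^esub> k = \<one>\<^bsub>dihedral n\<^esub> \<longleftrightarrow> n div gcd j n dvd k" .
  qed
qed

lemma ord_refl: assumes "n > 0" "0 \<le> i" "i < int n"
  shows "group.ord (dihedral n) (i, True) = 2"
proof -
  interpret group "dihedral n" using dih_group assms by blast
  have c: "(i, True) \<in> carrier (dihedral n)" using assms by (simp add: dih_carrier)
  show ?thesis
    unfolding ord_unique[OF c]
    using assms by (simp add: pow_refl dih_one)
qed



definition ro :: "nat \<Rightarrow> nat \<Rightarrow> nat" where "ro n j = n div gcd j n"

lemma div_div_self': assumes "(n::nat) > 0" "d dvd n" shows "n div (n div d) = d"
proof -
  obtain k where k: "n = d * k" using assms(2) by (elim dvdE)
  then have "d > 0" "k > 0" using assms(1) by auto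
  then show ?thesis using k by simp
qed

lemma div_dvd_self': assumes "(d::nat) dvd n" shows "n div d dvd n"
proof -
  obtain k where k: "n = d * k" using assms by (elim dvdE)
  show ?thesis by (cases "d = 0") (use k in auto)
qed

lemma ro_dvd: "ro n j dvd n"
  unfolding ro_def by (metis dvd_mult_div_cancel dvd_triv_right gcd_dvd2)

lemma ro_pos: "n > 0 \<Longrightarrow> ro n j > 0"
  unfolding ro_def by (simp add: div_greater_zero_iff gcd_le2_nat)

lemma ro_eq1: assumes "n > 0" "j < n" shows "ro n j = 1 \<longleftrightarrow> j = 0"
proof
  assume "ro n j = 1"
  then have "gcd j n = n" unfolding ro_def
    using div_div_self'[of n "gcd j n"] assms(1) by simp
  then have "n dvd j" by (metis gcd_dvd1)
  then show "j = 0" using assms(2) by (metis dvd_imp_le le_0_eq not_le neq0_conv)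
qed (simp add: ro_def assms)

lemma card_ro_eq: assumes "n > 0" "d dvd n"
  shows "card {j \<in> {..<n}. ro n j = d} = totient d"
proof -
  have "{j \<in> {..<n}. ro n j = d} = {j \<in> {..<n}. gcd j n = n div d}"
  proof (intro Collect_cong conj_cong refl)
    fix j
    have g: "gcd j n dvd n" "gcd j n > 0" using assms by auto
    show "ro n j = d \<longleftrightarrow> gcd j n = n div d" unfolding ro_def
      using g assms div_div_self'[of n "gcd j n"] div_div_self'[of n d] by metis
  qed
  also have "card \<dots> = card {k \<in> {0<..n}. gcd k n = n div d}"
  proof (rule bij_betw_same_card[where f = "\<lambda>j. if j = 0 then n else j"])
    show "bij_betw (\<lambda>j. if j = 0 then n else j) {j \<in> {..<n}. gcd j n = n div d}
        {k \<in> {0<..n}. gcd k n = n div d}"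
      unfolding bij_betw_def
    proof
      show "inj_on (\<lambda>j. if j = 0 then n else j) {j \<in> {..<n}. gcd j n = n div d}"
        by (auto simp: inj_on_def)
      show "(\<lambda>j. if j = 0 then n else j) ` {j \<in> {..<n}. gcd j n = n div d} = {k \<in> {0<..n}. gcd k n = n div d}"
      proof (intro equalityI subsetI)
        fix k assume "k \<in> (\<lambda>j. if j = 0 then n else j) ` {j \<in> {..<n}. gcd j n = n div d}"
        then show "k \<in> {k \<in> {0<..n}. gcd k n = n div d}" using assms by (auto split: if_splits)
      next
        fix k assume k: "k \<in> {k \<in> {0<..n}. gcd k n = n div d}"
        show "k \<in> (\<lambda>j. if j = 0 then n else j) ` {j \<in> {..<n}. gcd j n = n div d}"
        proof (cases "k = n")
          case True
          then show ?thesis using k assms by (intro image_eqI[of _ _ 0]) auto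
        next
          case False
          then show ?thesis using k by (intro image_eqI[of _ _ k]) auto
        qed
      qed
    qed
  qed
  also have "\<dots> = totient (n div (n div d))"
    using assms by (intro card_gcd_eq_totient) (auto simp: div_dvd_self')
  also have "n div (n div d) = d" using assms by (rule div_div_self')
  finally show ?thesis .
qed

lemma sum_ro: assumes "n > 0"
  shows "(\<Sum>j\<in>{j\<in>{..<n}. P (ro n j)}. (g (ro n j) :: real)) =
         (\<Sum>d\<in>{d. d dvd n \<and> P d}. real (totient d) * g d)"
proof -
  have fT: "finite {d. d dvd n \<and> P d}" using assms by (auto intro: finite_subset[OF _ finite_divisors_nat])
  have "(\<Sum>j\<in>{j\<in>{..<n}. P (ro n j)}. g (ro n j)) =
     (\<Sum>d\<in>{d. d dvd n \<and> P d}. \<Sum>j\<in>{x. x \<in> {j\<in>{..<n}. P (ro n j)} \<and> ro n x = d}. g (ro n j))"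
    by (rule sum.group[symmetric]) (use fT ro_dvd in auto)
  also have "\<dots> = (\<Sum>d\<in>{d. d dvd n \<and> P d}. real (totient d) * g d)"
  proof (rule sum.cong[OF refl])
    fix d assume d: "d \<in> {d. d dvd n \<and> P d}"
    have "{x. x \<in> {j\<in>{..<n}. P (ro n j)} \<and> ro n x = d} = {j \<in> {..<n}. ro n j = d}"
      using d by auto
    then have "(\<Sum>j\<in>{x. x \<in> {j\<in>{..<n}. P (ro n j)} \<and> ro n x = d}. g (ro n j)) =
       (\<Sum>j\<in>{j \<in> {..<n}. ro n j = d}. g d)" by simp
    also have "\<dots> = real (totient d) * g d" using card_ro_eq[OF assms] d by simp
    finally show "(\<Sum>j\<in>{x. x \<in> {j\<in>{..<n}. P (ro n j)} \<and> ro n x = d}. g (ro n j)) = real (totient d) * g d" .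
  qed
  finally show ?thesis .
qed



lemma od_adj_sym: "od_adj G x y = od_adj G y x"
  unfolding od_adj_def by auto

lemma edge_double:
  assumes fin: "finite (carrier G)"
  shows "2 * card (od_edges G) = (\<Sum>x\<in>carrier G. card {y\<in>carrier G. od_adj G x y})"
proof -
  let ?C = "carrier G" and ?E = "od_edges G"
  have finE: "finite ?E"
  proof (rule finite_subset)
    show "?E \<subseteq> (\<lambda>(x,y). {x,y}) ` (?C \<times> ?C)" unfolding od_edges_def by auto
    show "finite ((\<lambda>(x,y). {x,y}) ` (?C \<times> ?C))" using fin by simp
  qed
  have "(\<Sum>x\<in>?C. card {e\<in>?E. x \<in> e}) = 2 * card ?E"
  proof (rule sum_multicount[OF fin finE])
    show "\<forall>e\<in>?E. card {x\<in>?C. x \<in> e} = 2"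
    proof
      fix e assume "e \<in> ?E"
      then obtain x y where e: "e = {x,y}" "x \<in> ?C" "y \<in> ?C" "x \<noteq> y"
        unfolding od_edges_def od_adj_def by auto
      then have "{x\<in>?C. x \<in> e} = {x,y}" by auto
      then show "card {x\<in>?C. x \<in> e} = 2" using e by simp
    qed
  qed
  moreover have "card {e\<in>?E. x \<in> e} = card {y\<in>?C. od_adj G x y}" if x: "x \<in> ?C" for x
  proof (rule sym, rule bij_betw_same_card[where f = "\<lambda>y. {x,y}"])
    show "bij_betw (\<lambda>y. {x,y}) {y\<in>?C. od_adj G x y} {e\<in>?E. x \<in> e}"
      unfolding bij_betw_def
    proof
      show "inj_on (\<lambda>y. {x,y}) {y\<in>?C. od_adj G x y}"
        by (auto simp: inj_on_def doubleton_eq_iff od_adj_def)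
      show "(\<lambda>y. {x,y}) ` {y\<in>?C. od_adj G x y} = {e\<in>?E. x \<in> e}"
      proof (intro equalityI subsetI)
        fix e assume "e \<in> (\<lambda>y. {x,y}) ` {y\<in>?C. od_adj G x y}"
        then show "e \<in> {e\<in>?E. x \<in> e}" using x unfolding od_edges_def by auto
      next
        fix e assume "e \<in> {e\<in>?E. x \<in> e}"
        then obtain a b where ab: "e = {a,b}" "a \<in> ?C" "b \<in> ?C" "od_adj G a b" "x \<in> e"
          unfolding od_edges_def by auto
        show "e \<in> (\<lambda>y. {x,y}) ` {y\<in>?C. od_adj G x y}"
        proof (cases "x = a")
          case True
          then show ?thesis using ab by auto
        next
          case False
          then have "x = b" using ab by auto
          then show ?thesis using ab od_adj_sym[of G a b] by (auto simp: insert_commute)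
        qed
      qed
    qed
  qed
  ultimately show ?thesis by simp
qed

lemma card_real_if: "finite A \<Longrightarrow> real (card {y\<in>A. P y}) = (\<Sum>y\<in>A. if P y then 1 else 0)"
  by (subst real_of_card) (rule sum.inter_filter)
lemma sum_carrier:
  "(\<Sum>x\<in>carrier (dihedral n). (h x :: real)) = (\<Sum>j<n. h (int j, False) + h (int j, True))"
proof -
  have "(\<Sum>x\<in>carrier (dihedral n). h x) = (\<Sum>x\<in>{0..<int n} \<times> (UNIV::bool set). h x)"
    by (simp only: dih_carrier)
  also have "\<dots> = (\<Sum>i\<in>{0..<int n}. \<Sum>b\<in>(UNIV::bool set). h (i, b))"
    by (simp add: sum.cartesian_product)
  also have "\<dots> = (\<Sum>i\<in>{0..<int n}. h (i, False) + h (i, True))"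
    by (intro sum.cong refl) (simp add: UNIV_bool)
  also have "{0..<int n} = int ` {0..<n}" by (simp only: image_int_atLeastLessThan of_nat_0)
  also have "(\<Sum>i\<in>int ` {0..<n}. h (i, False) + h (i, True)) = (\<Sum>j\<in>{0..<n}. h (int j, False) + h (int j, True))"
    by (rule sum.reindex_cong[where l=int]) auto
  also have "{0..<n} = {..<n}" by auto
  finally show ?thesis .
qed


definition chi :: "nat \<Rightarrow> nat \<Rightarrow> real" where
  "chi a b = (if a \<noteq> b \<and> (a dvd b \<or> b dvd a) then 1 else 0)"

lemma chi_split: "chi a b = (if b dvd a then 1 else 0) + (if a dvd b then 1 else 0) - 2 * (if a = b then 1 else 0)"
  unfolding chi_def using dvd_antisym[of a b] by auto

lemma sum_T_if: "finite T \<Longrightarrow> (\<Sum>d\<in>T. real (totient d) * (if P d then 1 else 0)) = (\<Sum>d\<in>{d\<in>T. P d}. real (totient d))"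
proof -
  assume f: "finite T"
  have "(\<Sum>d\<in>T. real (totient d) * (if P d then 1 else 0)) = (\<Sum>d\<in>T. if P d then real (totient d) else 0)"
    by (rule sum.cong) simp_all
  also have "\<dots> = (\<Sum>d\<in>{d\<in>T. P d}. real (totient d))" by (rule sum.inter_filter[symmetric, OF f])
  finally show ?thesis .
qed

lemma sum_chi: assumes n0: "n > 0" and a: "a dvd n"
  shows "(\<Sum>d\<in>{d. d dvd n}. real (totient d) * chi a d) =
    real a - 2 * real (totient a) + (\<Sum>l\<in>{l. l dvd (n div a)}. real (totient (l * a)))"
proof -
  let ?T = "{d. d dvd n}"
  have fT: "finite ?T" using n0 by simp
  have a0: "a > 0" using a n0 by (cases "a = 0") auto
  have "(\<Sum>d\<in>?T. real (totient d) * chi a d) =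
     (\<Sum>d\<in>?T. real (totient d) * (if d dvd a then 1 else 0)) +
     (\<Sum>d\<in>?T. real (totient d) * (if a dvd d then 1 else 0)) -
     2 * (\<Sum>d\<in>?T. real (totient d) * (if a = d then 1 else 0))"
    unfolding chi_split by (simp add: algebra_simps sum.distrib sum_subtractf sum_distrib_left)
  also have "(\<Sum>d\<in>?T. real (totient d) * (if d dvd a then 1 else 0)) = real a"
  proof -
    have "(\<Sum>d\<in>?T. real (totient d) * (if d dvd a then 1 else 0)) = (\<Sum>d\<in>{d\<in>?T. d dvd a}. real (totient d))"
      by (rule sum_T_if[OF fT])
    also have "{d\<in>?T. d dvd a} = {d. d dvd a}" using dvd_trans[OF _ a] by auto
    also have "(\<Sum>d\<in>{d. d dvd a}. real (totient d)) = real (\<Sum>d\<in>{d. d dvd a}. totient d)" by simp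
    also have "(\<Sum>d\<in>{d. d dvd a}. totient d) = a" by (rule totient_divisor_sum)
    finally show ?thesis .
  qed
  also have "(\<Sum>d\<in>?T. real (totient d) * (if a dvd d then 1 else 0)) = (\<Sum>l\<in>{l. l dvd (n div a)}. real (totient (l * a)))"
  proof -
    have "(\<Sum>d\<in>?T. real (totient d) * (if a dvd d then 1 else 0)) = (\<Sum>d\<in>{d\<in>?T. a dvd d}. real (totient d))"
      by (rule sum_T_if[OF fT])
    also have "{d\<in>?T. a dvd d} = (\<lambda>l. l * a) ` {l. l dvd (n div a)}"
    proof (intro equalityI subsetI)
      fix d assume "d \<in> {d\<in>?T. a dvd d}"
      then have ad: "a dvd d" "d dvd n" by auto
      then obtain l where "d = a * l" by (elim dvdE)
      then have "d = l * a" by simp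
      with ad have l: "d = l * a" "d dvd n" by auto
      obtain k where k: "n = l * a * k" using l by (auto elim!: dvdE)
      then have "n div a = l * k" using a0 by simp
      then have "l dvd n div a" by simp
      then show "d \<in> (\<lambda>l. l * a) ` {l. l dvd (n div a)}" using l by auto
    next
      fix d assume "d \<in> (\<lambda>l. l * a) ` {l. l dvd (n div a)}"
      then obtain l where l: "d = l * a" "l dvd n div a" by auto
      obtain k where k: "n div a = l * k" using l by (auto elim!: dvdE)
      have "n = a * (n div a)" using a by simp
      also have "\<dots> = (l * a) * k" using k by simp
      finally have "l * a dvd n" by (rule dvdI)
      then show "d \<in> {d\<in>?T. a dvd d}" using l by auto
    qed
    also have "(\<Sum>d\<in>(\<lambda>l. l * a) ` {l. l dvd (n div a)}. real (totient d)) = (\<Sum>l\<in>{l. l dvd (n div a)}. real (totient (l * a)))"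
      by (rule sum.reindex_cong[where l = "\<lambda>l. l * a"]) (use a0 in \<open>auto simp: inj_on_def\<close>)
    finally show ?thesis .
  qed
  also have "(\<Sum>d\<in>?T. real (totient d) * (if a = d then 1 else 0)) = real (totient a)"
  proof -
    have "(\<Sum>d\<in>?T. real (totient d) * (if a = d then 1 else 0)) = (\<Sum>d\<in>{d\<in>?T. a = d}. real (totient d))"
      by (rule sum_T_if[OF fT])
    also have "{d\<in>?T. a = d} = {a}" using a by auto
    finally show ?thesis by simp
  qed
  finally show ?thesis by simp
qed



lemma chi_sym: "chi a b = chi b a" unfolding chi_def by auto

lemma odd_dvd_2: assumes "odd (a::nat)" shows "chi a 2 = (if a = 1 then 1 else 0)"
proof -
  have "a \<noteq> 2" using assms by auto
  moreover have "\<not> 2 dvd a" using assms by auto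
  moreover have "a dvd 2 \<longleftrightarrow> a = 1"
  proof
    assume d: "a dvd 2"
    have "a \<le> 2" by (rule dvd_imp_le[OF d]) simp
    moreover have "a \<noteq> 0" using d by (cases "a = 0") simp_all
    ultimately have "a \<le> 2" "a > 0" by simp_all
    then show "a = 1" using \<open>a \<noteq> 2\<close> by linarith
  qed simp
  ultimately show ?thesis unfolding chi_def by auto
qed

theorem mainTheorem19:
  fixes n :: nat
  assumes "n \<ge> 3" and "odd n"
  shows "real (card (od_edges (dihedral n))) =
    (1/2) * (3 * real n - 1 +
      (\<Sum>m\<in>{m. m dvd n \<and> m > 1}.
         (real m - 2 * real (totient m) +
          (\<Sum>l\<in>{l. l dvd (n div m)}. real (totient (l * m)))) * real (totient m)))"
proof -
  have n0: "n > 0" using assms by simp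
  define G where "G = dihedral n"
  define T where "T = {d. d dvd n}"
  define T' where "T' = {m. m dvd n \<and> m > 1}"
  define F where "F a = real a - 2 * real (totient a) + (\<Sum>l\<in>{l. l dvd (n div a)}. real (totient (l * a)))" for a
  define D where "D a = (\<Sum>j<n. chi a (ro n j) + chi a 2)" for a
  have fT: "finite T" unfolding T_def using n0 by simp
  have oddT: "odd d" if "d \<in> T" for d
    using that assms(2) unfolding T_def by (auto intro: dvd_trans)
  have ordF: "group.ord G (int j, False) = ro n j" if "j < n" for j
    unfolding G_def ro_def using ord_rot[OF n0 that] .
  have ordT: "group.ord G (int j, True) = 2" if "j < n" for j
    unfolding G_def using ord_refl[OF n0] that by simp
  have finC: "finite (carrier G)" unfolding G_def dih_carrier by simp
  have deg: "real (card {y\<in>carrier G. od_adj G x y}) = D (group.ord G x)" for x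
  proof -
    have "real (card {y\<in>carrier G. od_adj G x y}) = (\<Sum>y\<in>carrier G. if od_adj G x y then 1 else 0)"
      by (rule card_real_if[OF finC])
    also have "\<dots> = (\<Sum>y\<in>carrier G. chi (group.ord G x) (group.ord G y))"
      by (rule sum.cong) (auto simp: od_adj_def chi_def)
    also have "\<dots> = (\<Sum>j<n. chi (group.ord G x) (group.ord G (int j, False)) + chi (group.ord G x) (group.ord G (int j, True)))"
      unfolding G_def by (rule sum_carrier)
    also have "\<dots> = D (group.ord G x)" unfolding D_def
      by (rule sum.cong) (simp_all add: ordF ordT)
    finally show ?thesis .
  qed
  have sumro: "(\<Sum>j<n. g (ro n j)) = (\<Sum>d\<in>T. real (totient d) * g d)" for g :: "nat \<Rightarrow> real"
    using sum_ro[OF n0, where P="\<lambda>_. True" and g=g] unfolding T_def by (simp add: lessThan_def)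
  have Dval: "D a = (\<Sum>d\<in>T. real (totient d) * chi a d) + real n * chi a 2" for a
    unfolding D_def sum.distrib using sumro[of "chi a"] by simp
  have "real (2 * card (od_edges G)) = real (\<Sum>x\<in>carrier G. card {y\<in>carrier G. od_adj G x y})"
    using edge_double[OF finC] by simp
  also have "\<dots> = (\<Sum>x\<in>carrier G. D (group.ord G x))"
    by (simp add: deg)
  also have "\<dots> = (\<Sum>j<n. D (ro n j) + D 2)"
    unfolding G_def by (subst sum_carrier) (rule sum.cong, simp_all add: ordF[unfolded G_def] ordT[unfolded G_def])
  also have "\<dots> = (\<Sum>d\<in>T. real (totient d) * D d) + real n * D 2"
    by (simp add: sum.distrib sumro)
  finally have E2: "2 * real (card (od_edges G)) = (\<Sum>d\<in>T. real (totient d) * D d) + real n * D 2"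
    by simp
  have D2: "D 2 = 1"
  proof -
    have c22: "chi 2 2 = 0" by (simp add: chi_def)
    have "D 2 = (\<Sum>d\<in>T. real (totient d) * chi 2 d)" by (simp add: Dval c22)
    also have "\<dots> = (\<Sum>d\<in>T. real (totient d) * (if d = 1 then 1 else 0))"
      by (rule sum.cong[OF refl]) (simp add: chi_sym[of 2] odd_dvd_2 oddT)
    also have "\<dots> = (\<Sum>d\<in>{d\<in>T. d = 1}. real (totient d))" by (rule sum_T_if[OF fT])
    also have "{d\<in>T. d = 1} = {1}" unfolding T_def by auto
    finally show ?thesis by simp
  qed
  have Dd: "D d = F d + real n * (if d = 1 then 1 else 0)" if "d \<in> T" for d
    unfolding Dval F_def using sum_chi[OF n0, of d] that odd_dvd_2[OF oddT[OF that]]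
    unfolding T_def by simp
  have "(\<Sum>d\<in>T. real (totient d) * D d) = (\<Sum>d\<in>T. real (totient d) * F d) + real n * (\<Sum>d\<in>T. real (totient d) * (if d = 1 then 1 else 0))"
    by (simp add: Dd sum.distrib sum_distrib_left algebra_simps cong: sum.cong)
  also have "(\<Sum>d\<in>T. real (totient d) * (if d = 1 then 1 else 0)) = 1"
  proof -
    have "(\<Sum>d\<in>T. real (totient d) * (if d = 1 then 1 else 0)) = (\<Sum>d\<in>{d\<in>T. d = 1}. real (totient d))" by (rule sum_T_if[OF fT])
    also have "{d\<in>T. d = 1} = {1}" unfolding T_def by auto
    finally show ?thesis by simp
  qed
  also have "(\<Sum>d\<in>T. real (totient d) * F d) = F 1 + (\<Sum>m\<in>T'. real (totient m) * F m)"
  proof -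
    have "T = insert 1 T'" unfolding T_def T'_def using n0 by (auto intro: gr0I)
    moreover have "1 \<notin> T'" unfolding T'_def by simp
    moreover have "finite T'" using fT \<open>T = insert 1 T'\<close> by simp
    ultimately show ?thesis by simp
  qed
  also have "F 1 = real n - 1"
  proof -
    have "(\<Sum>l\<in>{l. l dvd n}. real (totient l)) = real n"
      using totient_divisor_sum[of n] by (metis of_nat_sum)
    then show ?thesis unfolding F_def by simp
  qed
  finally have "(\<Sum>d\<in>T. real (totient d) * D d) = real n - 1 + (\<Sum>m\<in>T'. real (totient m) * F m) + real n"
    by simp
  with E2 D2 have "2 * real (card (od_edges G)) = 3 * real n - 1 + (\<Sum>m\<in>T'. F m * real (totient m))"
    by (simp add: mult.commute)
  then show ?thesis unfolding G_def T'_def F_def by simp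
qed


end
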